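(* Let $A\in\mathbb{R}^{m\times n}$ with $AA^{\top}$ invertible, let $0<x_{\min}\le x_{\max}$, and let $\boldsymbol x_o,\hat{\boldsymbol x},\tilde{\boldsymbol x}\in\mathbb{R}^n$ have all entries in $[x_{\min},x_{\max}]$. Put $X_o=\mathrm{diag}(\boldsymbol x_o)$, $\hat X=\mathrm{diag}(\hat{\boldsymbol x})$, $\tilde X=\mathrm{diag}(\tilde{\boldsymbol x})$, $\Sigma_o=(AX_o^2A^{\top})^{-1}$, $\hat\Sigma=(A\hat X^2A^{\top})^{-1}$, $\tilde\Sigma=(A\tilde X^2A^{\top})^{-1}$. Then every eigenvalue $\lambda_i$ of $\Sigma_o^{-1/2}(\hat\Sigma-\tilde\Sigma)\Sigma_o^{-1/2}$ satisfies $$|\lambda_i|\le \frac{x_{\max}^2\,\lambda_{\max}^2(AA^{\top})\,\|\hat{\boldsymbol x}^2-\tilde{\boldsymbol x}^2\|_\infty}{x_{\min}^4\,\lambda_{\min}^2(AA^{\top})}.$$ Furthermore, for any $\sigma_w>0$ and any vectors $\boldsymbol w_1,\dots,\boldsymbol w_L\in\mathbb{R}^n$, with $\boldsymbol y_\ell=AX_o\boldsymbol w_\ell$, $$\Big|\frac1{L\sigma_w^2}\sum_{\ell=1}^L\boldsymbol y_\ell^{\top}(\hat\Sigma-\tilde\Sigma)\boldsymbol y_\ell\Big|\le \frac{x_{\max}^2\,\lambda_{\max}^2(AA^{\top})\,\|\hat{\boldsymbol x}^2-\tilde{\boldsymbol x}^2\|_\infty}{x_{\min}^4\,\lambda_{\min}^2(AA^{\top})}\Big(1+\frac1{L\sigma_w^2}\sum_{\ell=1}^L\boldsymbol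 w_\ell^{\top}\boldsymbol w_\ell\Big).$$
   Context: For a vector $\boldsymbol x$, $\boldsymbol x^2$ denotes the entrywise square; $\lambda_{\max},\lambda_{\min}$ denote largest and smallest eigenvalues; $\Sigma_o^{-1/2}$ is the symmetric square root of $\Sigma_o^{-1}=AX_o^2A^{\top}$ inverted appropriately (i.e. $(AX_o^2A^{\top})^{1/2}$). *)

theory Defs
  imports "HOL-Analysis.Analysis"
begin

definition diag_mat :: "real^'n \<Rightarrow> real^'n^'n" where
  "diag_mat x = (\<chi> i j. if i = j then x $ i else 0)"

definition vec_sq :: "real^'n \<Rightarrow> real^'n" where
  "vec_sq x = (\<chi> i. (x $ i)^2)"

definition is_eigenvalue :: "real^'n^'n \<Rightarrow> real \<Rightarrow> bool" where
  "is_eigenvalue M lam \<longleftrightarrow> (\<exists>v. v \<noteq> 0 \<and> M *v v = lam *\<^sub>R v)"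

definition lambda_max :: "real^'n^'n \<Rightarrow> real" where
  "lambda_max M = Max {lam. is_eigenvalue M lam}"

definition lambda_min :: "real^'n^'n \<Rightarrow> real" where
  "lambda_min M = Min {lam. is_eigenvalue M lam}"

definition psd_mat :: "real^'n^'n \<Rightarrow> bool" where
  "psd_mat S \<longleftrightarrow> transpose S = S \<and> (\<forall>v. 0 \<le> v \<bullet> (S *v v))"

definition mat_sqrt :: "real^'n^'n \<Rightarrow> real^'n^'n" where
  "mat_sqrt M = (THE S. psd_mat S \<and> S ** S = M)"

end

theory Submission
  imports Defs
begin


lemma dot_mat_transpose: "((A::real^'n^'m) *v x) \<bullet> y = x \<bullet> (transpose A *v y)"
  apply (simp add: inner_vec_def matrix_vector_mult_def transpose_def sum_distrib_right sum_distrib_left ac_simps)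
  apply (subst sum.swap)
  apply simp
  done
lemma sym_dot: "transpose M = M \<Longrightarrow> ((M::real^'m^'m) *v x) \<bullet> y = x \<bullet> (M *v y)"
  using dot_mat_transpose[of M x y] by simp

lemma quad_scale: "(c *\<^sub>R z) \<bullet> ((M::real^'m^'m) *v (c *\<^sub>R z)) = c^2 * (z \<bullet> (M *v z))"
  by (simp add: matrix_vector_mult_scaleR power2_eq_square)

lemma eig_exists:
  fixes M :: "real^'m^'m"
  assumes sym: "transpose M = M" and sub: "subspace V" and inv: "\<forall>v\<in>V. M *v v \<in> V"
    and ne: "V \<noteq> {0}"
  shows "\<exists>u\<in>V. norm u = 1 \<and> M *v u = (u \<bullet> (M *v u)) *\<^sub>R u"
proof -
  let ?K = "V \<inter> sphere 0 1"
  have cK: "compact ?K"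
    using closed_subspace[OF sub] compact_sphere by (rule closed_Int_compact)
  obtain v where v: "v \<in> V" "v \<noteq> 0" using ne sub subspace_0 by blast
  have "v /\<^sub>R norm v \<in> ?K"
  proof (rule IntI)
    show "v /\<^sub>R norm v \<in> V" using sub v(1) by (simp add: subspace_scale)
    show "v /\<^sub>R norm v \<in> sphere 0 1" using v(2) by simp
  qed
  then have neK: "?K \<noteq> {}" by blast
  have cont: "continuous_on ?K (\<lambda>z. z \<bullet> (M *v z))"
    by (intro continuous_intros)
  obtain u where u: "u \<in> ?K" and umax: "\<forall>y\<in>?K. y \<bullet> (M *v y) \<le> u \<bullet> (M *v u)"
    using continuous_attains_sup[OF cK neK cont] by (elim bexE)
  define lam where "lam = u \<bullet> (M *v u)"
  have bound: "z \<bullet> (M *v z) \<le> lam * (z \<bullet> z)" if z: "z \<in> V" for z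
  proof (cases "z = 0")
    case True then show ?thesis by simp
  next
    case False
    have "z /\<^sub>R norm z \<in> ?K"
    proof (rule IntI)
      show "z /\<^sub>R norm z \<in> V" using sub z by (simp add: subspace_scale)
      show "z /\<^sub>R norm z \<in> sphere 0 1" using False by simp
    qed
    then have h: "(z /\<^sub>R norm z) \<bullet> (M *v (z /\<^sub>R norm z)) \<le> lam" unfolding lam_def using umax by blast
    have "(z /\<^sub>R norm z) \<bullet> (M *v (z /\<^sub>R norm z)) = (inverse (norm z))^2 * (z \<bullet> (M *v z))"
      by (rule quad_scale)
    also have "(inverse (norm z))^2 = inverse (z \<bullet> z)" by (simp add: power2_norm_eq_inner power_inverse)
    finally have "inverse (z \<bullet> z) * (z \<bullet> (M *v z)) \<le> lam" using h by simp
    moreover have "z \<bullet> z > 0" using False by simp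
    ultimately show ?thesis by (simp add: field_simps)
  qed
  define d where "d = lam *\<^sub>R u - M *v u"
  have uV: "u \<in> V" using u by blast
  have dV: "d \<in> V" unfolding d_def
    using subspace_diff[OF sub subspace_scale[OF sub uV]] inv uV by blast
  have uu: "u \<bullet> u = 1" using u by (simp add: norm_eq_1)
  have ud: "u \<bullet> d = 0" unfolding d_def by (simp add: inner_diff_right uu lam_def)
  have dMu: "d \<bullet> (M *v u) = - (d \<bullet> d)"
  proof -
    have "M *v u = lam *\<^sub>R u - d" by (simp add: d_def)
    then have "d \<bullet> (M *v u) = lam * (d \<bullet> u) - d \<bullet> d" by (simp add: inner_diff_right)
    then show ?thesis using ud by (simp add: inner_commute)
  qed
  have key: "2 * t * (d \<bullet> d) \<le> t^2 * (lam * (d \<bullet> d) - d \<bullet> (M *v d))" if "t \<ge> 0" for t :: real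
  proof -
    have "(u - t *\<^sub>R d) \<in> V" using subspace_diff[OF sub uV subspace_scale[OF sub dV]] .
    from bound[OF this]
    have "(u - t *\<^sub>R d) \<bullet> (M *v (u - t *\<^sub>R d)) \<le> lam * ((u - t *\<^sub>R d) \<bullet> (u - t *\<^sub>R d))" .
    moreover have "(u - t *\<^sub>R d) \<bullet> (M *v (u - t *\<^sub>R d)) = u \<bullet> (M *v u) - t * (d \<bullet> (M *v u)) - t * (u \<bullet> (M *v d)) + t^2 * (d \<bullet> (M *v d))"
      apply (simp add: matrix_vector_mult_diff_distrib matrix_vector_mult_scaleR
          inner_diff_left inner_diff_right power2_eq_square)
      apply (simp add: algebra_simps)
      done
    moreover have "u \<bullet> (M *v d) = d \<bullet> (M *v u)"
      using sym_dot[OF sym, of d u] by (metis inner_commute)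
    moreover have "(u - t *\<^sub>R d) \<bullet> (u - t *\<^sub>R d) = u \<bullet> u - 2 * t * (u \<bullet> d) + t^2 * (d \<bullet> d)"
      by (simp add: inner_diff_left inner_diff_right power2_eq_square inner_commute)
    ultimately have "lam - 2 * t * (d \<bullet> (M *v u)) + t^2 * (d \<bullet> (M *v d)) \<le> lam * (1 + t^2 * (d \<bullet> d))"
      using uu ud unfolding lam_def by simp
    moreover have "lam * (1 + t^2 * (d \<bullet> d)) = lam + t^2 * (lam * (d \<bullet> d))" by (simp add: distrib_left)
    moreover have "t^2 * (lam * (d \<bullet> d) - d \<bullet> (M *v d)) = t^2 * (lam * (d \<bullet> d)) - t^2 * (d \<bullet> (M *v d))"
      by (simp add: right_diff_distrib)
    moreover have "2 * t * (d \<bullet> (M *v u)) = - (2 * t * (d \<bullet> d))" using dMu by simp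
    ultimately show ?thesis by linarith
  qed
  have "d \<bullet> d = 0"
  proof (rule ccontr)
    assume "d \<bullet> d \<noteq> 0"
    then have a: "d \<bullet> d > 0" by (simp add: order_le_neq_trans)
    define c where "c = lam * (d \<bullet> d) - d \<bullet> (M *v d)"
    define s where "s = (d \<bullet> d) / (\<bar>c\<bar> + 1)"
    have s: "s > 0" using a by (simp add: s_def)
    have "2 * s * (d \<bullet> d) \<le> s^2 * c" using key[of s] s c_def by simp
    then have "2 * (d \<bullet> d) \<le> s * c" using s by (simp add: power2_eq_square)
    also have "s * c \<le> s * \<bar>c\<bar>" using s by (simp add: mult_left_mono)
    also have "s * \<bar>c\<bar> \<le> d \<bullet> d" unfolding s_def using a
      by (simp add: divide_le_eq mult.commute mult_left_mono)
    finally show False using a by simp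
  qed
  then have "d = 0" by simp
  then show ?thesis using u by (auto simp: d_def lam_def)
qed

definition eigON :: "real^'m^'m \<Rightarrow> (real^'m) set \<Rightarrow> bool" where
  "eigON M B \<longleftrightarrow> finite B \<and> pairwise orthogonal B \<and>
     (\<forall>u\<in>B. norm u = 1 \<and> M *v u = (u \<bullet> (M *v u)) *\<^sub>R u)"

lemma eigON_card:
  fixes M :: "real^'m^'m"
  assumes "eigON M B" shows "card B \<le> CARD('m)"
proof -
  have "0 \<notin> B" using assms unfolding eigON_def by force
  then have "independent B" using assms pairwise_orthogonal_independent unfolding eigON_def by blast
  then have "card B \<le> DIM(real^'m)" by (rule independent_card_le)
  then show ?thesis by (simp add: DIM_cart)
qed

lemma onb_sum_delta:
  assumes "finite B" "pairwise orthogonal B" "\<forall>u\<in>B. norm u = 1" "w \<in> B"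
  shows "(\<Sum>u\<in>B. f u * (w \<bullet> (u::real^'m))) = f w"
proof -
  have "(\<Sum>u\<in>B. f u * (w \<bullet> u)) = (\<Sum>u\<in>B. if u = w then f w else 0)"
  proof (rule sum.cong)
    fix u assume "u \<in> B"
    show "f u * (w \<bullet> u) = (if u = w then f w else 0)"
    proof (cases "u = w")
      case True
      then have "w \<bullet> u = 1" using assms \<open>u \<in> B\<close> by (simp add: norm_eq_1)
      then show ?thesis using True by simp
    next
      case False
      then have "w \<noteq> u" by simp
      then have "w \<bullet> u = 0" using assms(2,4) \<open>u \<in> B\<close> unfolding pairwise_def orthogonal_def by blast
      then show ?thesis using False by simp
    qed
  qed simp
  also have "\<dots> = f w" using assms by (simp add: sum.delta')
  finally show ?thesis .
qed

lemma spectral: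
  fixes M :: "real^'m^'m"
  assumes sym: "transpose M = M"
  obtains B where "eigON M B" "\<And>v. v = (\<Sum>u\<in>B. (u \<bullet> v) *\<^sub>R u)"
proof -
  define K where "K = card ` {B. eigON M B}"
  have finK: "finite K"
  proof (rule finite_subset)
    show "K \<subseteq> {..CARD('m)}"
    proof
      fix k assume "k \<in> K"
      then obtain B where "B \<in> {B. eigON M B}" "k = card B" unfolding K_def by (rule imageE)
      then show "k \<in> {..CARD('m)}" using eigON_card[of M B] by simp
    qed
  qed simp
  have "eigON M {}" unfolding eigON_def by simp
  then have "K \<noteq> {}" unfolding K_def by blast
  then have "Max K \<in> K" using finK by simp
  then obtain B where B0: "B \<in> {B. eigON M B}" and cB0: "Max K = card B" unfolding K_def by (rule imageE)
  from B0 have B: "eigON M B" by simp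
  from cB0 have cB: "card B = Max K" by simp
  have finB: "finite B" and poB: "pairwise orthogonal B" and nB: "\<forall>u\<in>B. norm u = 1"
    and eB: "\<forall>u\<in>B. M *v u = (u \<bullet> (M *v u)) *\<^sub>R u"
    using B unfolding eigON_def by auto
  define V where "V = {v. \<forall>u\<in>B. u \<bullet> v = 0}"
  have sub: "subspace V" unfolding subspace_def V_def by (simp add: inner_add_right)
  have inv: "\<forall>v\<in>V. M *v v \<in> V"
  proof
    fix v assume v: "v \<in> V"
    show "M *v v \<in> V" unfolding V_def mem_Collect_eq
    proof (intro ballI)
      fix u assume u: "u \<in> B"
      have "u \<bullet> (M *v v) = (M *v u) \<bullet> v" using sym_dot[OF sym, of u v] by simp
      also have "\<dots> = (u \<bullet> (M *v u)) * (u \<bullet> v)"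
      proof -
        have e: "M *v u = (u \<bullet> (M *v u)) *\<^sub>R u" using eB u by blast
        show ?thesis using arg_cong[OF e, of "\<lambda>z. z \<bullet> v"] by simp
      qed
      also have "\<dots> = 0" using v u unfolding V_def by simp
      finally show "u \<bullet> (M *v v) = 0" .
    qed
  qed
  have V0: "V = {0}"
  proof (rule ccontr)
    assume "V \<noteq> {0}"
    from eig_exists[OF sym sub inv this] obtain w where w: "w \<in> V" "norm w = 1"
      "M *v w = (w \<bullet> (M *v w)) *\<^sub>R w" by blast
    have "w \<notin> B"
    proof
      assume "w \<in> B"
      then have "w \<bullet> w = 0" using w(1) unfolding V_def by blast
      then show False using w(2) by simp
    qed
    have "eigON M (insert w B)" unfolding eigON_def
    proof (intro conjI)
      show "finite (insert w B)" using finB by simp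
      show "pairwise orthogonal (insert w B)"
      proof (rule pairwise_orthogonal_insert[OF poB])
        fix y assume "y \<in> B" then show "orthogonal w y"
        proof -
          have "y \<bullet> w = 0" using w(1) \<open>y \<in> B\<close> unfolding V_def by blast
          then show ?thesis unfolding orthogonal_def by (simp add: inner_commute)
        qed
      qed
      show "\<forall>u\<in>insert w B. norm u = 1 \<and> M *v u = (u \<bullet> (M *v u)) *\<^sub>R u"
        using w nB eB by auto
    qed
    then have "card (insert w B) \<in> K" unfolding K_def by blast
    then have "card (insert w B) \<le> Max K" using finK by simp
    moreover have "card (insert w B) = Suc (card B)" using finB \<open>w \<notin> B\<close> by simp
    ultimately show False using cB by simp
  qed
  have "v = (\<Sum>u\<in>B. (u \<bullet> v) *\<^sub>R u)" for v
  proof -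
    define r where "r = v - (\<Sum>u\<in>B. (u \<bullet> v) *\<^sub>R u)"
    have "r \<in> V" unfolding V_def mem_Collect_eq
    proof (intro ballI)
      fix w assume w: "w \<in> B"
      have "w \<bullet> (\<Sum>u\<in>B. (u \<bullet> v) *\<^sub>R u) = (\<Sum>u\<in>B. (u \<bullet> v) * (w \<bullet> u))"
        by (simp add: inner_sum_right)
      also have "\<dots> = w \<bullet> v" by (rule onb_sum_delta[OF finB poB nB w])
      finally show "w \<bullet> r = 0" unfolding r_def by (simp add: inner_diff_right)
    qed
    then have "r = 0" using V0 by blast
    then show ?thesis unfolding r_def by simp
  qed
  then show ?thesis using that B by blast
qed


definition qmat :: "(real^'m \<Rightarrow> real) \<Rightarrow> (real^'m) set \<Rightarrow> real^'m^'m" where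
  "qmat c B = (\<chi> i j. \<Sum>u\<in>B. c u * (u$i * u$j))"

lemma qmat_mult: "qmat c B *v v = (\<Sum>u\<in>B. (c u * (u \<bullet> v)) *\<^sub>R u)"
proof -
  have "(qmat c B *v v) $ i = (\<Sum>u\<in>B. (c u * (u \<bullet> v)) *\<^sub>R u) $ i" for i
  proof -
    have "(qmat c B *v v) $ i = (\<Sum>j\<in>UNIV. (\<Sum>u\<in>B. c u * (u$i * u$j)) * v$j)"
      by (simp add: qmat_def matrix_vector_mult_def)
    also have "\<dots> = (\<Sum>j\<in>UNIV. \<Sum>u\<in>B. c u * u$i * (u$j * v$j))"
      by (simp add: sum_distrib_right sum_distrib_left mult_ac)
    also have "\<dots> = (\<Sum>u\<in>B. \<Sum>j\<in>UNIV. c u * u$i * (u$j * v$j))"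
      by (rule sum.swap)
    also have "\<dots> = (\<Sum>u\<in>B. c u * u$i * (u \<bullet> v))"
      by (simp add: inner_vec_def sum_distrib_left)
    also have "\<dots> = (\<Sum>u\<in>B. (c u * (u \<bullet> v)) *\<^sub>R u) $ i"
      by (simp add: sum_component mult_ac)
    finally show ?thesis .
  qed
  then show ?thesis by (simp add: vec_eq_iff)
qed

lemma qmat_sym: "transpose (qmat c B) = qmat c B"
  by (simp add: qmat_def transpose_def vec_eq_iff mult.commute)

lemma eigON_expand_M:
  fixes M :: "real^'m^'m"
  assumes sym: "transpose M = M" and B: "eigON M B" and exp: "\<And>v. v = (\<Sum>u\<in>B. (u \<bullet> v) *\<^sub>R u)"
  shows "u \<in> B \<Longrightarrow> u \<bullet> (M *v v) = (u \<bullet> (M *v u)) * (u \<bullet> v)"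
proof -
  assume u: "u \<in> B"
  have e: "M *v u = (u \<bullet> (M *v u)) *\<^sub>R u" using B u unfolding eigON_def by blast
  have "u \<bullet> (M *v v) = (M *v u) \<bullet> v" using sym_dot[OF sym, of u v] by simp
  also have "\<dots> = (u \<bullet> (M *v u)) * (u \<bullet> v)" using arg_cong[OF e, of "\<lambda>z. z \<bullet> v"] by simp
  finally show ?thesis .
qed

lemma quad_expand:
  fixes M :: "real^'m^'m"
  assumes sym: "transpose M = M" and B: "eigON M B" and exp: "\<And>v. v = (\<Sum>u\<in>B. (u \<bullet> v) *\<^sub>R u)"
  shows "v \<bullet> (M *v v) = (\<Sum>u\<in>B. (u \<bullet> (M *v u)) * (u \<bullet> v)^2)"
    and "v \<bullet> v = (\<Sum>u\<in>B. (u \<bullet> v)^2)"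
proof -
  have "v \<bullet> (M *v v) = v \<bullet> (\<Sum>u\<in>B. (u \<bullet> (M *v v)) *\<^sub>R u)"
    by (rule arg_cong[where f="\<lambda>z. v \<bullet> z"]) (rule exp)
  also have "\<dots> = (\<Sum>u\<in>B. (u \<bullet> (M *v v)) * (v \<bullet> u))" by (simp add: inner_sum_right)
  also have "\<dots> = (\<Sum>u\<in>B. (u \<bullet> (M *v u)) * (u \<bullet> v)^2)"
  proof (rule sum.cong[OF refl])
    fix u assume u: "u \<in> B"
    have "u \<bullet> (M *v v) = (u \<bullet> (M *v u)) * (u \<bullet> v)" by (rule eigON_expand_M[OF sym B exp u])
    then show "(u \<bullet> (M *v v)) * (v \<bullet> u) = (u \<bullet> (M *v u)) * (u \<bullet> v)^2"
      by (simp add: power2_eq_square inner_commute)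
  qed
  finally show "v \<bullet> (M *v v) = (\<Sum>u\<in>B. (u \<bullet> (M *v u)) * (u \<bullet> v)^2)" .
  have "v \<bullet> v = v \<bullet> (\<Sum>u\<in>B. (u \<bullet> v) *\<^sub>R u)"
    by (rule arg_cong[where f="\<lambda>z. v \<bullet> z"]) (rule exp)
  also have "\<dots> = (\<Sum>u\<in>B. (u \<bullet> v)^2)" by (simp add: inner_sum_right power2_eq_square inner_commute)
  finally show "v \<bullet> v = (\<Sum>u\<in>B. (u \<bullet> v)^2)" .
qed

lemma eig_set_eq:
  fixes M :: "real^'m^'m"
  assumes sym: "transpose M = M" and B: "eigON M B" and exp: "\<And>v. v = (\<Sum>u\<in>B. (u \<bullet> v) *\<^sub>R u)"
  shows "{lam. is_eigenvalue M lam} = (\<lambda>u. u \<bullet> (M *v u)) ` B"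
proof
  show "{lam. is_eigenvalue M lam} \<subseteq> (\<lambda>u. u \<bullet> (M *v u)) ` B"
  proof
    fix lam assume "lam \<in> {lam. is_eigenvalue M lam}"
    then obtain v where v: "v \<noteq> 0" "M *v v = lam *\<^sub>R v" unfolding is_eigenvalue_def by blast
    have "\<exists>u\<in>B. u \<bullet> v \<noteq> 0"
    proof (rule ccontr)
      assume "\<not> ?thesis"
      then have "(\<Sum>u\<in>B. (u \<bullet> v) *\<^sub>R u) = 0" by simp
      then have "v = 0" by (rule trans[OF exp[of v]])
      then show False using v(1) by simp
    qed
    then obtain u where u: "u \<in> B" "u \<bullet> v \<noteq> 0" by blast
    have "lam * (u \<bullet> v) = u \<bullet> (M *v v)" using v(2) by simp
    also have "\<dots> = (u \<bullet> (M *v u)) * (u \<bullet> v)" by (rule eigON_expand_M[OF sym B exp u(1)])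
    finally have "lam = u \<bullet> (M *v u)" using u(2) by simp
    then show "lam \<in> (\<lambda>u. u \<bullet> (M *v u)) ` B" using u(1) by blast
  qed
  show "(\<lambda>u. u \<bullet> (M *v u)) ` B \<subseteq> {lam. is_eigenvalue M lam}"
  proof
    fix lam assume "lam \<in> (\<lambda>u. u \<bullet> (M *v u)) ` B"
    then obtain u where u: "u \<in> B" "lam = u \<bullet> (M *v u)" by blast
    have n1: "norm u = 1" and e: "M *v u = (u \<bullet> (M *v u)) *\<^sub>R u" using B u(1) unfolding eigON_def by blast+
    have "u \<noteq> 0" using n1 by auto
    moreover have "M *v u = lam *\<^sub>R u" by (subst u(2)) (rule e)
    ultimately show "lam \<in> {lam. is_eigenvalue M lam}" unfolding is_eigenvalue_def by blast
  qed
qed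

lemma sym_eig_facts:
  fixes M :: "real^'m^'m"
  assumes sym: "transpose M = M"
  shows "finite {lam. is_eigenvalue M lam}" "{lam. is_eigenvalue M lam} \<noteq> {}"
    "\<And>v. lambda_min M * (v \<bullet> v) \<le> v \<bullet> (M *v v)"
    "\<And>v. v \<bullet> (M *v v) \<le> lambda_max M * (v \<bullet> v)"
proof -
  obtain B where B: "eigON M B" and exp: "\<And>v. v = (\<Sum>u\<in>B. (u \<bullet> v) *\<^sub>R u)"
    using spectral[OF sym] by blast
  have finB: "finite B" using B unfolding eigON_def by blast
  let ?E = "{lam. is_eigenvalue M lam}"
  have E: "?E = (\<lambda>u. u \<bullet> (M *v u)) ` B" by (rule eig_set_eq[OF sym B exp])
  show finE: "finite ?E" using E finB by simp
  have "B \<noteq> {}"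
  proof
    assume "B = {}"
    then have "(\<Sum>u\<in>B. (u \<bullet> vec 1) *\<^sub>R u) = (0::real^'m)" by simp
    then have "(vec 1 :: real^'m) = 0" by (rule trans[OF exp])
    then show False by (simp add: vec_eq_iff)
  qed
  then show neE: "?E \<noteq> {}" using E by simp
  fix v
  have mu: "u \<in> B \<Longrightarrow> u \<bullet> (M *v u) \<in> ?E" for u using E by blast
  have "lambda_min M * (v \<bullet> v) = (\<Sum>u\<in>B. lambda_min M * (u \<bullet> v)^2)"
    by (simp add: quad_expand(2)[OF sym B exp] sum_distrib_left)
  also have "\<dots> \<le> (\<Sum>u\<in>B. (u \<bullet> (M *v u)) * (u \<bullet> v)^2)"
  proof (rule sum_mono)
    fix u assume "u \<in> B"
    then have "lambda_min M \<le> u \<bullet> (M *v u)" unfolding lambda_min_def using mu finE by simp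
    then show "lambda_min M * (u \<bullet> v)^2 \<le> (u \<bullet> (M *v u)) * (u \<bullet> v)^2"
      by (simp add: mult_right_mono)
  qed
  also have "\<dots> = v \<bullet> (M *v v)" by (rule quad_expand(1)[OF sym B exp, symmetric])
  finally show "lambda_min M * (v \<bullet> v) \<le> v \<bullet> (M *v v)" .
  have "v \<bullet> (M *v v) = (\<Sum>u\<in>B. (u \<bullet> (M *v u)) * (u \<bullet> v)^2)" by (rule quad_expand(1)[OF sym B exp])
  also have "\<dots> \<le> (\<Sum>u\<in>B. lambda_max M * (u \<bullet> v)^2)"
  proof (rule sum_mono)
    fix u assume "u \<in> B"
    then have "u \<bullet> (M *v u) \<le> lambda_max M" unfolding lambda_max_def using mu finE by simp
    then show "(u \<bullet> (M *v u)) * (u \<bullet> v)^2 \<le> lambda_max M * (u \<bullet> v)^2"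
      by (simp add: mult_right_mono)
  qed
  also have "\<dots> = lambda_max M * (v \<bullet> v)"
    by (simp add: quad_expand(2)[OF sym B exp] sum_distrib_left)
  finally show "v \<bullet> (M *v v) \<le> lambda_max M * (v \<bullet> v)" .
qed


lemma mat_sqrt_props:
  fixes M :: "real^'m^'m"
  assumes sym: "transpose M = M" and pd: "\<And>v. v \<noteq> 0 \<Longrightarrow> 0 < v \<bullet> (M *v v)"
  shows "psd_mat (mat_sqrt M) \<and> mat_sqrt M ** mat_sqrt M = M"
proof -
  obtain B where B: "eigON M B" and exp: "\<And>v. v = (\<Sum>u\<in>B. (u \<bullet> v) *\<^sub>R u)"
    using spectral[OF sym] by blast
  have finB: "finite B" and poB: "pairwise orthogonal B" and nB: "\<forall>u\<in>B. norm u = 1"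
    and eB: "\<forall>u\<in>B. M *v u = (u \<bullet> (M *v u)) *\<^sub>R u"
    using B unfolding eigON_def by auto
  define mu where "mu u = u \<bullet> (M *v u)" for u
  have mupos: "mu u > 0" if "u \<in> B" for u
  proof -
    have "u \<noteq> 0" using nB that by auto
    then show ?thesis unfolding mu_def by (rule pd)
  qed
  have eu: "M *v u = mu u *\<^sub>R u" if "u \<in> B" for u
    using eB that unfolding mu_def by blast
  define S where "S = qmat (\<lambda>u. sqrt (mu u)) B"
  have Sv: "S *v v = (\<Sum>u\<in>B. (sqrt (mu u) * (u \<bullet> v)) *\<^sub>R u)" for v
    unfolding S_def by (rule qmat_mult)
  have uS: "u \<bullet> (S *v v) = sqrt (mu u) * (u \<bullet> v)" if u: "u \<in> B" for u v
  proof -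
    have "u \<bullet> (S *v v) = (\<Sum>w\<in>B. (sqrt (mu w) * (w \<bullet> v)) * (u \<bullet> w))"
      unfolding Sv by (simp add: inner_sum_right)
    also have "\<dots> = sqrt (mu u) * (u \<bullet> v)"
      by (rule onb_sum_delta[OF finB poB nB u])
    finally show ?thesis .
  qed
  have Mv: "M *v v = (\<Sum>u\<in>B. (mu u * (u \<bullet> v)) *\<^sub>R u)" for v
  proof -
    have "M *v v = (\<Sum>u\<in>B. (u \<bullet> (M *v v)) *\<^sub>R u)" by (rule exp)
    also have "\<dots> = (\<Sum>u\<in>B. (mu u * (u \<bullet> v)) *\<^sub>R u)"
    proof (rule sum.cong[OF refl])
      fix u assume u: "u \<in> B"
      have "u \<bullet> (M *v v) = (u \<bullet> (M *v u)) * (u \<bullet> v)" by (rule eigON_expand_M[OF sym B exp u])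
      then show "(u \<bullet> (M *v v)) *\<^sub>R u = (mu u * (u \<bullet> v)) *\<^sub>R u" unfolding mu_def by simp
    qed
    finally show ?thesis .
  qed
  have psdS: "psd_mat S"
    unfolding psd_mat_def
  proof (intro conjI allI)
    show "transpose S = S" unfolding S_def by (rule qmat_sym)
    fix v
    have "v \<bullet> (S *v v) = (\<Sum>u\<in>B. sqrt (mu u) * (u \<bullet> v) * (v \<bullet> u))"
      unfolding Sv by (simp add: inner_sum_right)
    also have "\<dots> = (\<Sum>u\<in>B. sqrt (mu u) * (u \<bullet> v)^2)"
      by (simp add: power2_eq_square inner_commute mult.assoc)
    also have "\<dots> \<ge> 0"
      by (rule sum_nonneg) (simp add: mupos less_imp_le)
    finally show "0 \<le> v \<bullet> (S *v v)" .
  qed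
  have SS: "S ** S = M"
  proof -
    have "(S ** S) *v v = M *v v" for v
    proof -
      have "(S ** S) *v v = S *v (S *v v)" by (simp add: matrix_vector_mul_assoc)
      also have "\<dots> = (\<Sum>u\<in>B. (sqrt (mu u) * (u \<bullet> (S *v v))) *\<^sub>R u)" by (rule Sv)
      also have "\<dots> = (\<Sum>u\<in>B. (mu u * (u \<bullet> v)) *\<^sub>R u)"
      proof (rule sum.cong[OF refl])
        fix u assume u: "u \<in> B"
        have "sqrt (mu u) * sqrt (mu u) = mu u" using mupos[OF u] by simp
        then show "(sqrt (mu u) * (u \<bullet> (S *v v))) *\<^sub>R u = (mu u * (u \<bullet> v)) *\<^sub>R u"
          using uS[OF u, of v] by (simp add: mult.assoc[symmetric])
      qed
      also have "\<dots> = M *v v" by (rule Mv[symmetric])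
      finally show ?thesis .
    qed
    then show ?thesis by (simp add: matrix_eq)
  qed
  have uniq: "T = S" if T: "psd_mat T \<and> T ** T = M" for T
  proof -
    have symT: "transpose T = T" and psdT: "\<And>v. 0 \<le> v \<bullet> (T *v v)" and TT: "T ** T = M"
      using T unfolding psd_mat_def by auto
    have Tu: "T *v u = sqrt (mu u) *\<^sub>R u" if u: "u \<in> B" for u
    proof -
      define s where "s = sqrt (mu u)"
      have s: "s > 0" "s * s = mu u" using mupos[OF u] unfolding s_def by simp_all
      define z where "z = T *v u - s *\<^sub>R u"
      have TTu: "T *v (T *v u) = mu u *\<^sub>R u"
        using eu[OF u] TT by (simp add: matrix_vector_mul_assoc)
      have "T *v z + s *\<^sub>R z = T *v (T *v u) - (s * s) *\<^sub>R u"
        unfolding z_def by (simp add: matrix_vector_mult_diff_distrib matrix_vector_mult_scaleR algebra_simps)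
      also have "\<dots> = 0" using TTu s(2) by simp
      finally have "z \<bullet> (T *v z + s *\<^sub>R z) = 0" by simp
      then have "z \<bullet> (T *v z) + s * (z \<bullet> z) = 0" by (simp add: inner_add_right)
      moreover have "0 \<le> z \<bullet> (T *v z)" by (rule psdT)
      moreover have "0 \<le> s * (z \<bullet> z)" using s(1) by simp
      ultimately have "s * (z \<bullet> z) = 0" by linarith
      then have "z = 0" using s(1) by simp
      then show ?thesis unfolding z_def s_def by simp
    qed
    have "T *v v = S *v v" for v
    proof -
      have "T *v v = (\<Sum>u\<in>B. (u \<bullet> (T *v v)) *\<^sub>R u)" by (rule exp)
      also have "\<dots> = (\<Sum>u\<in>B. (sqrt (mu u) * (u \<bullet> v)) *\<^sub>R u)"
      proof (rule sum.cong[OF refl])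
        fix u assume u: "u \<in> B"
        have "u \<bullet> (T *v v) = (T *v u) \<bullet> v" using sym_dot[OF symT, of u v] by simp
        also have "\<dots> = sqrt (mu u) * (u \<bullet> v)" using Tu[OF u] by simp
        finally show "(u \<bullet> (T *v v)) *\<^sub>R u = (sqrt (mu u) * (u \<bullet> v)) *\<^sub>R u" by simp
      qed
      also have "\<dots> = S *v v" by (rule Sv[symmetric])
      finally show ?thesis .
    qed
    then show ?thesis by (simp add: matrix_eq)
  qed
  have "mat_sqrt M = S" unfolding mat_sqrt_def
  proof (rule the_equality)
    show "psd_mat S \<and> S ** S = M" using psdS SS by blast
  next
    fix T assume "psd_mat T \<and> T ** T = M"
    then show "T = S" by (rule uniq)
  qed
  then show ?thesis using psdS SS by (simp only:)
qed


lemma AAT_sym: "transpose ((A::real^'n^'m) ** transpose A) = A ** transpose A"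
  by (simp add: matrix_transpose_mul)

lemma dot_A: "v \<bullet> ((A::real^'n^'m) *v z) = (transpose A *v v) \<bullet> z"
  using dot_mat_transpose[of A z v] by (simp add: inner_commute)

lemma AAT_quad: "v \<bullet> ((A ** transpose A) *v v) = (transpose A *v v) \<bullet> (transpose A *v (v::real^'m))"
  by (simp add: matrix_vector_mul_assoc[symmetric] dot_A)

lemma inv_facts:
  fixes G :: "real^'m^'m"
  assumes c: "c > 0" and pd: "\<And>v. c * (v \<bullet> v) \<le> v \<bullet> (G *v v)"
  shows "G ** matrix_inv G = mat 1" "matrix_inv G ** G = mat 1"
    "\<And>s. c * norm (matrix_inv G *v s) \<le> norm s"
proof -
  have "\<forall>x. G *v x = 0 \<longrightarrow> x = 0"
  proof (intro allI impI)
    fix x assume "G *v x = 0"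
    then have "c * (x \<bullet> x) \<le> 0" using pd[of x] by simp
    then have "x \<bullet> x \<le> 0" using c by (simp add: mult_le_0_iff)
    then show "x = 0" by (metis inner_ge_zero inner_eq_zero_iff antisym)
  qed
  then have "invertible G" unfolding invertible_left_inverse matrix_left_invertible_ker .
  then have "\<exists>A'. G ** A' = mat 1 \<and> A' ** G = mat 1" unfolding invertible_def .
  then have inv: "G ** matrix_inv G = mat 1 \<and> matrix_inv G ** G = mat 1"
    unfolding matrix_inv_def by (rule someI_ex)
  then show "G ** matrix_inv G = mat 1" "matrix_inv G ** G = mat 1" by auto
  fix s
  define p where "p = matrix_inv G *v s"
  have Gp: "G *v p = s" unfolding p_def using inv by (simp add: matrix_vector_mul_assoc)
  have "c * (norm p)^2 \<le> p \<bullet> (G *v p)" using pd[of p] by (simp add: power2_norm_eq_inner)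
  also have "\<dots> = p \<bullet> s" using Gp by simp
  also have "\<dots> \<le> norm p * norm s" by (rule norm_cauchy_schwarz)
  finally have h: "c * (norm p)^2 \<le> norm p * norm s" .
  show "c * norm (matrix_inv G *v s) \<le> norm s"
  proof (cases "p = 0")
    case True then show ?thesis unfolding p_def[symmetric] by simp
  next
    case False
    then have "norm p > 0" by simp
    then show ?thesis using h unfolding p_def[symmetric]
      by (simp add: power2_eq_square mult.assoc[symmetric] mult_le_cancel_right_pos)
  qed
qed

lemma AAT_bounds:
  fixes A :: "real^'n^'m"
  assumes inv: "invertible (A ** transpose A)"
  shows "lambda_min (A ** transpose A) > 0"
    "lambda_min (A ** transpose A) \<le> lambda_max (A ** transpose A)"
    "\<And>v. lambda_min (A ** transpose A) * (v \<bullet> v) \<le> (transpose A *v v) \<bullet> (transpose A *v v)"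
    "\<And>v. (transpose A *v v) \<bullet> (transpose A *v v) \<le> lambda_max (A ** transpose A) * (v \<bullet> v)"
    "\<And>z. norm (A *v z) \<le> sqrt (lambda_max (A ** transpose A)) * norm z"
    "\<And>v. norm (transpose A *v v) \<le> sqrt (lambda_max (A ** transpose A)) * norm v"
proof -
  let ?M = "A ** transpose A"
  let ?E = "{lam. is_eigenvalue ?M lam}"
  note F = sym_eig_facts[OF AAT_sym[of A]]
  show lo: "\<And>v. lambda_min ?M * (v \<bullet> v) \<le> (transpose A *v v) \<bullet> (transpose A *v v)"
    using F(3) by (simp add: AAT_quad)
  show hi: "\<And>v. (transpose A *v v) \<bullet> (transpose A *v v) \<le> lambda_max ?M * (v \<bullet> v)"
    using F(4) by (simp add: AAT_quad)
  have "lambda_min ?M \<in> ?E" unfolding lambda_min_def using F(1,2) by (rule Min_in)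
  then obtain v where v: "v \<noteq> 0" "?M *v v = lambda_min ?M *\<^sub>R v" unfolding is_eigenvalue_def by blast
  have "lambda_min ?M * (v \<bullet> v) = v \<bullet> (?M *v v)" using v(2) by simp
  also have "\<dots> = (transpose A *v v) \<bullet> (transpose A *v v)" by (rule AAT_quad)
  finally have "lambda_min ?M * (v \<bullet> v) \<ge> 0" by simp
  moreover have vv: "v \<bullet> v > 0" using v(1) by simp
  ultimately have ge: "lambda_min ?M \<ge> 0" by (simp add: zero_le_mult_iff)
  have "lambda_min ?M \<noteq> 0"
  proof
    assume "lambda_min ?M = 0"
    then have "?M *v v = 0" using v(2) by simp
    moreover obtain Bi where "Bi ** ?M = mat 1" using inv unfolding invertible_left_inverse by blast
    ultimately have "v = 0" by (metis matrix_vector_mul_assoc matrix_vector_mul_lid matrix_vector_mult_0_right)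
    then show False using v(1) by simp
  qed
  then show pos: "lambda_min ?M > 0" using ge by simp
  have "lambda_min ?M * (v \<bullet> v) \<le> lambda_max ?M * (v \<bullet> v)" using lo[of v] hi[of v] by linarith
  then show le: "lambda_min ?M \<le> lambda_max ?M" using vv by simp
  have hi': "norm (transpose A *v v) \<le> sqrt (lambda_max ?M) * norm v" for v
  proof -
    have "(norm (transpose A *v v))^2 \<le> lambda_max ?M * (norm v)^2"
      using hi[of v] by (simp add: power2_norm_eq_inner)
    then have "sqrt ((norm (transpose A *v v))^2) \<le> sqrt (lambda_max ?M * (norm v)^2)"
      by (rule real_sqrt_le_mono)
    then show ?thesis by (simp add: real_sqrt_mult)
  qed
  then show "\<And>v. norm (transpose A *v v) \<le> sqrt (lambda_max ?M) * norm v" .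
  fix z
  have "(norm (A *v z))^2 = z \<bullet> (transpose A *v (A *v z))"
    by (simp add: power2_norm_eq_inner dot_mat_transpose)
  also have "\<dots> \<le> norm z * norm (transpose A *v (A *v z))" by (rule norm_cauchy_schwarz)
  also have "\<dots> \<le> norm z * (sqrt (lambda_max ?M) * norm (A *v z))"
    by (rule mult_left_mono[OF hi']) simp
  finally have h: "(norm (A *v z))^2 \<le> norm z * (sqrt (lambda_max ?M) * norm (A *v z))" .
  show "norm (A *v z) \<le> sqrt (lambda_max ?M) * norm z"
  proof (cases "A *v z = 0")
    case True
    then show ?thesis using pos le by simp
  next
    case False
    then have "norm (A *v z) > 0" by simp
    then show ?thesis using h by (simp add: power2_eq_square mult_ac mult_le_cancel_left_pos)
  qed
qed


lemma diag_mult: "diag_mat x *v z = (\<chi> i. x$i * z$i)"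
proof -
  have "(diag_mat x *v z) $ i = x$i * z$i" for i
  proof -
    have "(diag_mat x *v z) $ i = (\<Sum>j\<in>UNIV. (if i = j then x $ i else 0) * z $ j)"
      by (simp add: diag_mat_def matrix_vector_mult_def)
    also have "\<dots> = (\<Sum>j\<in>UNIV. if j = i then x $ i * z $ i else 0)"
      by (rule sum.cong) auto
    also have "\<dots> = x$i * z$i" by simp
    finally show ?thesis .
  qed
  then show ?thesis by (simp add: vec_eq_iff)
qed

lemma diag_transpose: "transpose (diag_mat x) = diag_mat x"
  by (simp add: diag_mat_def transpose_def vec_eq_iff)

lemma G_apply:
  fixes A :: "real^'n^'m"
  shows "(A ** (diag_mat x ** diag_mat x) ** transpose A) *v p = A *v (\<chi> i. (x$i)^2 * (transpose A *v p)$i)"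
proof -
  have "(A ** (diag_mat x ** diag_mat x) ** transpose A) *v p
      = A *v (diag_mat x *v (diag_mat x *v (transpose A *v p)))"
    by (simp only: matrix_vector_mul_assoc matrix_mul_assoc)
  also have "diag_mat x *v (diag_mat x *v (transpose A *v p)) = (\<chi> i. (x$i)^2 * (transpose A *v p)$i)"
    by (simp add: diag_mult power2_eq_square mult.assoc)
  finally show ?thesis .
qed

lemma G_sym:
  fixes A :: "real^'n^'m"
  shows "transpose (A ** (diag_mat x ** diag_mat x) ** transpose A) = A ** (diag_mat x ** diag_mat x) ** transpose A"
  by (simp add: matrix_transpose_mul diag_transpose matrix_mul_assoc)

lemma G_quad:
  fixes A :: "real^'n^'m"
  shows "v \<bullet> ((A ** (diag_mat x ** diag_mat x) ** transpose A) *v v) = (\<Sum>i\<in>UNIV. (x$i)^2 * ((transpose A *v v)$i)^2)"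
  unfolding G_apply dot_A by (simp add: inner_vec_def power2_eq_square mult_ac)

lemma weighted_bounds:
  fixes q x :: "real^'n"
  assumes "\<forall>i. x_min \<le> x $ i \<and> x $ i \<le> x_max" "0 < x_min"
  shows "x_min^2 * (q \<bullet> q) \<le> (\<Sum>i\<in>UNIV. (x$i)^2 * (q$i)^2)"
    "(\<Sum>i\<in>UNIV. (x$i)^2 * (q$i)^2) \<le> x_max^2 * (q \<bullet> q)"
proof -
  have qq: "q \<bullet> q = (\<Sum>i\<in>UNIV. (q$i)^2)" by (simp add: inner_vec_def power2_eq_square)
  have lo: "x_min^2 \<le> (x$i)^2" for i using assms by (intro power_mono) auto
  have hi: "(x$i)^2 \<le> x_max^2" for i using assms by (intro power_mono) (auto intro: order_trans[OF less_imp_le])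
  show "x_min^2 * (q \<bullet> q) \<le> (\<Sum>i\<in>UNIV. (x$i)^2 * (q$i)^2)"
    unfolding qq sum_distrib_left by (rule sum_mono) (simp add: mult_right_mono lo)
  show "(\<Sum>i\<in>UNIV. (x$i)^2 * (q$i)^2) \<le> x_max^2 * (q \<bullet> q)"
    unfolding qq sum_distrib_left by (rule sum_mono) (simp add: mult_right_mono hi)
qed

lemma G_bounds:
  fixes A :: "real^'n^'m" and x :: "real^'n"
  assumes inv: "invertible (A ** transpose A)"
    and xb: "\<forall>i. x_min \<le> x $ i \<and> x $ i \<le> x_max" and xm: "0 < x_min"
  shows "x_min^2 * lambda_min (A ** transpose A) * (v \<bullet> v) \<le> v \<bullet> ((A ** (diag_mat x ** diag_mat x) ** transpose A) *v v)"
    "v \<bullet> ((A ** (diag_mat x ** diag_mat x) ** transpose A) *v v) \<le> x_max^2 * lambda_max (A ** transpose A) * (v \<bullet> v)"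
proof -
  let ?q = "transpose A *v v"
  note W = weighted_bounds[OF xb xm, of ?q]
  note AB = AAT_bounds[OF inv]
  have "x_min^2 * lambda_min (A ** transpose A) * (v \<bullet> v) \<le> x_min^2 * (?q \<bullet> ?q)"
    using AB(3)[of v] by (simp add: mult.assoc mult_left_mono)
  also have "\<dots> \<le> v \<bullet> ((A ** (diag_mat x ** diag_mat x) ** transpose A) *v v)"
    unfolding G_quad using W(1) .
  finally show "x_min^2 * lambda_min (A ** transpose A) * (v \<bullet> v) \<le> v \<bullet> ((A ** (diag_mat x ** diag_mat x) ** transpose A) *v v)" .
  have "v \<bullet> ((A ** (diag_mat x ** diag_mat x) ** transpose A) *v v) \<le> x_max^2 * (?q \<bullet> ?q)"
    unfolding G_quad using W(2) .
  also have "\<dots> \<le> x_max^2 * lambda_max (A ** transpose A) * (v \<bullet> v)"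
    using AB(4)[of v] by (simp add: mult.assoc mult_left_mono)
  finally show "v \<bullet> ((A ** (diag_mat x ** diag_mat x) ** transpose A) *v v) \<le> x_max^2 * lambda_max (A ** transpose A) * (v \<bullet> v)" .
qed


lemma chi_diff: "(\<chi> i. f i) - (\<chi> i. g i) = (\<chi> i. (f i - g i :: real))"
  by (simp add: vec_eq_iff)

lemma comp_mult_norm:
  fixes d q :: "real^'n"
  assumes "\<forall>i. \<bar>d$i\<bar> \<le> delta"
  shows "norm (\<chi> i. d$i * q$i) \<le> delta * norm q"
proof -
  have dl: "0 \<le> delta" using assms by (meson abs_ge_zero order_trans)
  have "(\<chi> i. d$i * q$i) \<bullet> (\<chi> i. d$i * q$i) \<le> (delta *\<^sub>R q) \<bullet> (delta *\<^sub>R q)"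
  proof -
    have "(\<chi> i. d$i * q$i) \<bullet> (\<chi> i. d$i * q$i) = (\<Sum>i\<in>UNIV. (d$i)^2 * (q$i)^2)"
      by (simp add: inner_vec_def power2_eq_square mult_ac)
    also have "\<dots> \<le> (\<Sum>i\<in>UNIV. delta^2 * (q$i)^2)"
    proof (rule sum_mono)
      fix i
      have "(d$i)^2 \<le> delta^2" using assms by (metis abs_le_square_iff abs_of_nonneg dl)
      then show "(d$i)^2 * (q$i)^2 \<le> delta^2 * (q$i)^2" by (simp add: mult_right_mono)
    qed
    also have "\<dots> = (delta *\<^sub>R q) \<bullet> (delta *\<^sub>R q)"
      by (simp add: inner_vec_def power2_eq_square sum_distrib_left mult_ac)
    finally show ?thesis .
  qed
  then have "norm (\<chi> i. d$i * q$i) \<le> norm (delta *\<^sub>R q)" by (simp only: norm_le)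
  then show ?thesis using dl by simp
qed

lemma S_bound:
  fixes A :: "real^'n^'m" and h t z
  assumes inv: "invertible (A ** transpose A)" and xm: "0 < x_min"
    and hb: "\<forall>i. x_min \<le> h $ i \<and> h $ i \<le> x_max"
    and tb: "\<forall>i. x_min \<le> t $ i \<and> t $ i \<le> x_max"
  shows "norm ((matrix_inv (A ** (diag_mat h ** diag_mat h) ** transpose A)
               - matrix_inv (A ** (diag_mat t ** diag_mat t) ** transpose A)) *v z)
         \<le> lambda_max (A ** transpose A) * infnorm (vec_sq h - vec_sq t)
            / (x_min^4 * (lambda_min (A ** transpose A))^2) * norm z"
proof -
  define Gh where "Gh = A ** (diag_mat h ** diag_mat h) ** transpose A"
  define Gt where "Gt = A ** (diag_mat t ** diag_mat t) ** transpose A"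
  define lmin where "lmin = lambda_min (A ** transpose A)"
  define lmax where "lmax = lambda_max (A ** transpose A)"
  define delta where "delta = infnorm (vec_sq h - vec_sq t)"
  define c where "c = x_min^2 * lmin"
  note AB = AAT_bounds[OF inv, folded lmin_def lmax_def]
  have c: "c > 0" unfolding c_def using xm AB(1) by simp
  have lmax0: "0 \<le> lmax" using AB(1,2) by simp
  have pdh: "c * (v \<bullet> v) \<le> v \<bullet> (Gh *v v)" for v
    unfolding c_def Gh_def lmin_def using G_bounds(1)[OF inv hb xm] .
  have pdt: "c * (v \<bullet> v) \<le> v \<bullet> (Gt *v v)" for v
    unfolding c_def Gt_def lmin_def using G_bounds(1)[OF inv tb xm] .
  note Ih = inv_facts[OF c pdh] and It = inv_facts[OF c pdt]
  define p where "p = matrix_inv Gt *v z"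
  have Gtp: "Gt *v p = z" unfolding p_def using It(1) by (simp add: matrix_vector_mul_assoc)
  have hp: "matrix_inv Gh *v (Gh *v p) = p" using Ih(2) by (simp add: matrix_vector_mul_assoc)
  define q where "q = transpose A *v p"
  define d where "d = (\<chi> i. (t$i)^2 - (h$i)^2)"
  have diff: "Gt *v p - Gh *v p = A *v (\<chi> i. d$i * q$i)"
    unfolding Gt_def Gh_def G_apply q_def d_def
    by (simp add: matrix_vector_mult_diff_distrib[symmetric] chi_diff left_diff_distrib)
  have Sz: "(matrix_inv Gh - matrix_inv Gt) *v z = matrix_inv Gh *v (A *v (\<chi> i. d$i * q$i))"
  proof -
    have "(matrix_inv Gh - matrix_inv Gt) *v z = matrix_inv Gh *v z - p"
      unfolding p_def by (simp add: matrix_vector_mult_diff_rdistrib)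
    also have "\<dots> = matrix_inv Gh *v (Gt *v p) - matrix_inv Gh *v (Gh *v p)" using Gtp hp by simp
    also have "\<dots> = matrix_inv Gh *v (Gt *v p - Gh *v p)" by (simp add: matrix_vector_mult_diff_distrib)
    finally show ?thesis unfolding diff .
  qed
  have dbound: "\<forall>i. \<bar>d$i\<bar> \<le> delta"
  proof
    fix i
    have "\<bar>d$i\<bar> = \<bar>(vec_sq h - vec_sq t) $ i\<bar>" unfolding d_def vec_sq_def by simp
    also have "\<dots> \<le> delta" unfolding delta_def by (rule component_le_infnorm_cart)
    finally show "\<bar>d$i\<bar> \<le> delta" .
  qed
  have d0: "0 \<le> delta" unfolding delta_def by (rule infnorm_pos_le)
  have "c * norm ((matrix_inv Gh - matrix_inv Gt) *v z) \<le> norm (A *v (\<chi> i. d$i * q$i))"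
    unfolding Sz by (rule Ih(3))
  also have "\<dots> \<le> sqrt lmax * norm (\<chi> i. d$i * q$i)" by (rule AB(5))
  also have "\<dots> \<le> sqrt lmax * (delta * norm q)"
    by (rule mult_left_mono[OF comp_mult_norm[OF dbound]]) (simp add: lmax0)
  also have "\<dots> \<le> sqrt lmax * (delta * (sqrt lmax * norm p))"
    unfolding q_def using AB(6)[of p] d0 lmax0
    by (intro mult_left_mono) auto
  also have "\<dots> = lmax * delta * norm p" using lmax0
    by (simp add: mult_ac real_sqrt_mult[symmetric])
  finally have h1: "c * norm ((matrix_inv Gh - matrix_inv Gt) *v z) \<le> lmax * delta * norm p" .
  have h2: "c * norm p \<le> norm z" unfolding p_def by (rule It(3))
  have "c * (c * norm ((matrix_inv Gh - matrix_inv Gt) *v z)) \<le> c * (lmax * delta * norm p)"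
    using h1 c by (simp add: mult_left_mono)
  also have "\<dots> = lmax * delta * (c * norm p)" by (simp add: mult_ac)
  also have "\<dots> \<le> lmax * delta * norm z" using h2 lmax0 d0 by (simp add: mult_left_mono)
  finally have h3: "(c * c) * norm ((matrix_inv Gh - matrix_inv Gt) *v z) \<le> lmax * delta * norm z"
    by (simp add: mult.assoc)
  have cc: "c * c = x_min^4 * lmin^2" unfolding c_def by (simp add: power2_eq_square power4_eq_xxxx mult_ac)
  have "c * c > 0" using c by simp
  then have "norm ((matrix_inv Gh - matrix_inv Gt) *v z) \<le> lmax * delta * norm z / (c * c)"
    using h3 by (simp add: le_divide_eq mult.commute)
  also have "\<dots> = lmax * delta / (x_min^4 * lmin^2) * norm z" unfolding cc by simp
  finally show ?thesis unfolding Gh_def Gt_def lmax_def lmin_def delta_def .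
qed


theorem lemma7:
  fixes A :: "real^'n^'m"
    and x_min x_max sigma_w :: real
    and x_o x_hat x_tilde :: "real^'n"
    and w :: "nat \<Rightarrow> real^'n"
    and L :: nat
  assumes "invertible (A ** transpose A)"
    and "0 < x_min" and "x_min \<le> x_max"
    and "\<forall>i. x_min \<le> x_o $ i \<and> x_o $ i \<le> x_max"
    and "\<forall>i. x_min \<le> x_hat $ i \<and> x_hat $ i \<le> x_max"
    and "\<forall>i. x_min \<le> x_tilde $ i \<and> x_tilde $ i \<le> x_max"
    and "0 < sigma_w" and "1 \<le> L"
  shows
    "let X_o = diag_mat x_o; X_hat = diag_mat x_hat; X_tilde = diag_mat x_tilde;
         Sig_o = matrix_inv (A ** (X_o ** X_o) ** transpose A);
         Sig_hat = matrix_inv (A ** (X_hat ** X_hat) ** transpose A);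
         Sig_tilde = matrix_inv (A ** (X_tilde ** X_tilde) ** transpose A);
         R = mat_sqrt (A ** (X_o ** X_o) ** transpose A);
         B = x_max^2 * (lambda_max (A ** transpose A))^2
               * infnorm (vec_sq x_hat - vec_sq x_tilde)
             / (x_min^4 * (lambda_min (A ** transpose A))^2);
         y = (\<lambda>l. A *v (X_o *v w l))
     in (\<forall>lam. is_eigenvalue (R ** (Sig_hat - Sig_tilde) ** R) lam \<longrightarrow> \<bar>lam\<bar> \<le> B)
      \<and> \<bar>(1 / (real L * sigma_w^2)) * (\<Sum>l=1..L. y l \<bullet> ((Sig_hat - Sig_tilde) *v y l))\<bar>
          \<le> B * (1 + (1 / (real L * sigma_w^2)) * (\<Sum>l=1..L. w l \<bullet> w l))"
proof -
  note inv = assms(1) and xm = assms(2) and xmM = assms(3) and ob = assms(4)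
    and hb = assms(5) and tb = assms(6) and sw = assms(7) and L1 = assms(8)
  define Go where "Go = A ** (diag_mat x_o ** diag_mat x_o) ** transpose A"
  define S where "S = matrix_inv (A ** (diag_mat x_hat ** diag_mat x_hat) ** transpose A)
                    - matrix_inv (A ** (diag_mat x_tilde ** diag_mat x_tilde) ** transpose A)"
  define R where "R = mat_sqrt Go"
  define lmin where "lmin = lambda_min (A ** transpose A)"
  define lmax where "lmax = lambda_max (A ** transpose A)"
  define delta where "delta = infnorm (vec_sq x_hat - vec_sq x_tilde)"
  define K where "K = lmax * delta / (x_min^4 * lmin^2)"
  define B where "B = x_max^2 * lmax^2 * delta / (x_min^4 * lmin^2)"
  note AB = AAT_bounds[OF inv, folded lmin_def lmax_def]
  have lmax0: "0 \<le> lmax" using AB(1,2) by simp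
  have d0: "0 \<le> delta" unfolding delta_def by (rule infnorm_pos_le)
  have K0: "0 \<le> K" unfolding K_def using lmax0 d0 by simp
  have BK: "B = x_max^2 * lmax * K" unfolding B_def K_def by (simp add: power2_eq_square)
  have B0: "0 \<le> B" unfolding BK using K0 lmax0 by simp
  have Sb: "norm (S *v z) \<le> K * norm z" for z
    unfolding S_def K_def lmax_def lmin_def delta_def by (rule S_bound[OF inv xm hb tb])
  have cpos: "0 < x_min^2 * lmin" using xm AB(1) by simp
  have pdo: "0 < v \<bullet> (Go *v v)" if "v \<noteq> 0" for v
  proof -
    have "x_min^2 * lmin * (v \<bullet> v) \<le> v \<bullet> (Go *v v)"
      unfolding Go_def lmin_def by (rule G_bounds(1)[OF inv ob xm])
    moreover have "0 < x_min^2 * lmin * (v \<bullet> v)" using cpos that by simp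
    ultimately show ?thesis by linarith
  qed
  have Rp: "psd_mat R \<and> R ** R = Go" unfolding R_def
  proof (rule mat_sqrt_props)
    show "transpose Go = Go" unfolding Go_def by (rule G_sym)
    show "\<And>v. v \<noteq> 0 \<Longrightarrow> 0 < v \<bullet> (Go *v v)" by (rule pdo)
  qed
  have Rsym: "transpose R = R" and RR: "R ** R = Go" using Rp unfolding psd_mat_def by auto
  have Rb: "norm (R *v v) \<le> x_max * sqrt lmax * norm v" for v
  proof -
    have "(norm (R *v v))^2 = v \<bullet> (R *v (R *v v))"
      using sym_dot[OF Rsym, of v "R *v v"] by (simp add: power2_norm_eq_inner)
    also have "\<dots> = v \<bullet> (Go *v v)" using RR by (simp add: matrix_vector_mul_assoc)
    also have "\<dots> \<le> x_max^2 * lmax * (v \<bullet> v)"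
      unfolding Go_def lmax_def by (rule G_bounds(2)[OF inv ob xm])
    also have "\<dots> = (x_max * sqrt lmax * norm v)^2" using lmax0
      by (simp add: power_mult_distrib power2_norm_eq_inner)
    finally have "(norm (R *v v))^2 \<le> (x_max * sqrt lmax * norm v)^2" .
    moreover have "0 \<le> x_max * sqrt lmax * norm v" using xm xmM lmax0 by simp
    ultimately show ?thesis by (rule power2_le_imp_le)
  qed
  have part1: "\<forall>lam. is_eigenvalue (R ** S ** R) lam \<longrightarrow> \<bar>lam\<bar> \<le> B"
  proof (intro allI impI)
    fix lam assume "is_eigenvalue (R ** S ** R) lam"
    then obtain v where v: "v \<noteq> 0" "(R ** S ** R) *v v = lam *\<^sub>R v" unfolding is_eigenvalue_def by blast
    have "R *v (S *v (R *v v)) = lam *\<^sub>R v" using v(2) by (simp only: matrix_vector_mul_assoc matrix_mul_assoc)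
    then have "\<bar>lam\<bar> * norm v = norm (R *v (S *v (R *v v)))" by simp
    also have "\<dots> \<le> x_max * sqrt lmax * norm (S *v (R *v v))" by (rule Rb)
    also have "\<dots> \<le> x_max * sqrt lmax * (K * norm (R *v v))"
      using xm xmM lmax0 Sb by (intro mult_left_mono) auto
    also have "\<dots> \<le> x_max * sqrt lmax * (K * (x_max * sqrt lmax * norm v))"
      using xm xmM lmax0 Rb K0 by (intro mult_left_mono) auto
    also have "\<dots> = B * norm v" unfolding BK using lmax0
      by (simp add: mult_ac power2_eq_square real_sqrt_mult[symmetric])
    finally show "\<bar>lam\<bar> \<le> B" using v(1) by simp
  qed
  have yb: "\<bar>(A *v (diag_mat x_o *v u)) \<bullet> (S *v (A *v (diag_mat x_o *v u)))\<bar> \<le> B * (u \<bullet> u)" for u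
  proof -
    let ?y = "A *v (diag_mat x_o *v u)"
    have xo: "\<forall>i. \<bar>x_o $ i\<bar> \<le> x_max"
    proof
      fix i
      have "x_min \<le> x_o $ i" "x_o $ i \<le> x_max" using ob by auto
      then show "\<bar>x_o $ i\<bar> \<le> x_max" using xm by simp
    qed
    have "norm (diag_mat x_o *v u) \<le> x_max * norm u"
      unfolding diag_mult by (rule comp_mult_norm[OF xo])
    then have ny: "norm ?y \<le> sqrt lmax * (x_max * norm u)"
      using AB(5)[of "diag_mat x_o *v u"] lmax0
      by (meson mult_left_mono order_trans real_sqrt_ge_zero)
    have "\<bar>?y \<bullet> (S *v ?y)\<bar> \<le> norm ?y * norm (S *v ?y)" by (rule Cauchy_Schwarz_ineq2)
    also have "\<dots> \<le> norm ?y * (K * norm ?y)" by (rule mult_left_mono[OF Sb]) simp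
    also have "\<dots> = K * (norm ?y)^2" by (simp add: power2_eq_square)
    also have "\<dots> \<le> K * (sqrt lmax * (x_max * norm u))^2"
      by (rule mult_left_mono[OF power_mono[OF ny]]) (auto simp: K0)
    also have "\<dots> = B * (u \<bullet> u)" unfolding BK using lmax0
      by (simp add: power_mult_distrib power2_norm_eq_inner mult_ac)
    finally show ?thesis .
  qed
  define c where "c = 1 / (real L * sigma_w^2)"
  have c0: "0 \<le> c" unfolding c_def by simp
  have "\<bar>c * (\<Sum>l=1..L. (A *v (diag_mat x_o *v w l)) \<bullet> (S *v (A *v (diag_mat x_o *v w l))))\<bar>
      = c * \<bar>\<Sum>l=1..L. (A *v (diag_mat x_o *v w l)) \<bullet> (S *v (A *v (diag_mat x_o *v w l)))\<bar>"
    using c0 by (simp add: abs_mult)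
  also have "\<dots> \<le> c * (\<Sum>l=1..L. B * (w l \<bullet> w l))"
    by (rule mult_left_mono[OF order_trans[OF sum_abs sum_mono[OF yb]] c0])
  also have "\<dots> = B * (c * (\<Sum>l=1..L. w l \<bullet> w l))" by (simp add: sum_distrib_left mult_ac)
  also have "\<dots> \<le> B * (1 + c * (\<Sum>l=1..L. w l \<bullet> w l))" using B0 by (simp add: mult_left_mono)
  finally have part2: "\<bar>c * (\<Sum>l=1..L. (A *v (diag_mat x_o *v w l)) \<bullet> (S *v (A *v (diag_mat x_o *v w l))))\<bar>
      \<le> B * (1 + c * (\<Sum>l=1..L. w l \<bullet> w l))" .
  show ?thesis
    using part1 part2 unfolding Let_def R_def Go_def S_def B_def c_def lmax_def lmin_def delta_def by (rule conjI)
qed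

end
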